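(* Let $n\ge1$, let $(D_1,\dots,D_n)$ be jointly normal, each with mean $\mu$ and standard deviation $\sigma>0$, with common pairwise correlation $\rho$, $-\tfrac1{n-1}<\rho\le1$ (any $\rho$ if $n=1$), and let $L_n=\sqrt{n/(1+(n-1)\rho)}$. Let $r>c>\nu$, $0<t<r-\nu$, $g=r-c$, $\tilde g=c-\nu$, $p=r-\nu-t$, $R=(r-c)/(r-\nu)$, $\gamma=t/(r-\nu)$, $\tilde\gamma=1-\gamma=p/(r-\nu)$. For a common order quantity $X\in\mathbb{R}$ put $H_i=\max(X-D_i,0)$, $E_i=\max(D_i-X,0)$ and $$J_n(X)=\mathsf{E}\Big[\sum_{i=1}^n\big(r\min(X,D_i)+\nu H_i-cX\big)+p\min\Big(\sum_{i=1}^nH_i,\sum_{i=1}^nE_i\Big)\Big].$$ Let $Y_n$ be the unique real solution of $R=\gamma\Phi(Y_n)+\tilde\gamma\Phi(L_nY_n)$. Then $\max_{X\in\mathbb{R}}J_n(X)$ is attained at $X=\mu+\sigma Y_n$ and $$\dot J_n:=\max_{X}J_n(X)=n(g+\tilde g)\Big(R\mu-\sigma\big[\gamma\,\phi(Y_n)+\tilde\gamma\,\phi(L_nY_n)/L_n\big]\Big).$$ Consequently the equal allocation $\beta_n=\dot J_n/n$ of the grand coalition equals $(g+\tilde g)\big(R\mu-\sigma[\gamma\phi(Y_n)+\tilde\gamma\phi(L_nY_n)/L_n]\big)$.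
   Context: $\phi$ and $\Phi$ denote the standard normal pdf and cdf. $J_n(X)$ is the expected total profit of a coalition of $n$ identical newsvendors (selling price $r$, unit cost $c$, salvage value $\nu$) who all order $X$ and optimally transship surplus units among themselves at unit transportation cost $t$, each transshipped unit yielding profit $p$. *)

theory Defs
  imports "HOL-Probability.Probability"
begin

definition std_phi :: "real \<Rightarrow> real" where
  "std_phi x = std_normal_density x"

definition std_Phi :: "real \<Rightarrow> real" where
  "std_Phi y = (LBINT x:{..y}. std_normal_density x)"

text \<open>Jointly normal random vector (D_0, ..., D_(n-1)) on M with mean vector mu and
covariance matrix C: every linear combination is normal with the corresponding mean and
variance (a degenerate normal, i.e. a.s. constant, when the variance is 0).\<close>
definition jointly_normal ::
  "'a measure \<Rightarrow> nat \<Rightarrow> (nat \<Rightarrow> 'a \<Rightarrow> real) \<Rightarrow> (nat \<Rightarrow> real) \<Rightarrow> (nat \<Rightarrow> nat \<Rightarrow> real) \<Rightarrow> bool" where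
  "jointly_normal M n D mu C \<longleftrightarrow>
     (\<forall>i<n. D i \<in> borel_measurable M) \<and>
     (\<forall>a :: nat \<Rightarrow> real.
        let m = (\<Sum>i<n. a i * mu i);
            v = (\<Sum>i<n. \<Sum>j<n. a i * a j * C i j)
        in (if v > 0
            then distributed M lborel (\<lambda>\<omega>. \<Sum>i<n. a i * D i \<omega>)
                   (\<lambda>x. ennreal (normal_density m (sqrt v) x))
            else (AE \<omega> in M. (\<Sum>i<n. a i * D i \<omega>) = m)))"

definition J_coal ::
  "'a measure \<Rightarrow> nat \<Rightarrow> (nat \<Rightarrow> 'a \<Rightarrow> real) \<Rightarrow> real \<Rightarrow> real \<Rightarrow> real \<Rightarrow> real \<Rightarrow> real \<Rightarrow> real" where
  "J_coal M n D r c \<nu> t X =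
     (let p = r - \<nu> - t in
      integral\<^sup>L M (\<lambda>\<omega>.
        (\<Sum>i<n. r * min X (D i \<omega>) + \<nu> * max (X - D i \<omega>) 0 - c * X)
        + p * min (\<Sum>i<n. max (X - D i \<omega>) 0) (\<Sum>i<n. max (D i \<omega> - X) 0)))"

end

theory Submission
  imports Defs
begin

lemma Phi_alt: "std_Phi y = (\<integral>x. indicator {..y} x * std_normal_density x \<partial>lborel)"
  unfolding std_Phi_def set_lebesgue_integral_def by simp

lemma phi_le1: "std_normal_density x \<le> 1"
proof -
  have "sqrt (2*pi) \<ge> 1" using pi_gt3 by simp
  moreover have "exp (- x\<^sup>2 / 2) \<le> 1" by simp
  ultimately show ?thesis unfolding std_normal_density_def
    by (smt (verit) divide_le_eq_1 exp_gt_zero mult_le_one nonzero_mult_div_cancel_left times_divide_eq_left)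
qed

lemma int_ind: "integrable lborel f \<Longrightarrow> integrable lborel (\<lambda>x. indicator A x * f x :: real)"
  if "A \<in> sets borel" for A f
  using integrable_real_mult_indicator[of A lborel f] that by (simp add: mult.commute)

lemma ind_lt_le:
  fixes f :: "real \<Rightarrow> real"
  assumes [measurable]: "f \<in> borel_measurable borel"
  shows "(\<integral>x. indicator {..<y} x * f x \<partial>lborel) = (\<integral>x. indicator {..y} x * f x \<partial>lborel)"
  by (rule integral_cong_AE) (auto intro!: eventually_mono[OF AE_lborel_singleton[of y]] split: split_indicator)

lemma Phi_sym: "std_Phi y = 1 - std_Phi (- y)"
proof -
  have "std_Phi y = (LBINT x : {x. - x \<in> {..y}}. std_normal_density (- x))"
    unfolding std_Phi_def by (rule set_integral_reflect)
  also have "\<dots> = (\<integral>x. indicator {-y..} x * std_normal_density x \<partial>lborel)"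
    unfolding set_lebesgue_integral_def
    by (intro Bochner_Integration.integral_cong) (auto simp: std_normal_density_def split: split_indicator)
  also have "\<dots> = (\<integral>x. std_normal_density x - indicator {..< -y} x * std_normal_density x \<partial>lborel)"
    by (intro Bochner_Integration.integral_cong) (auto split: split_indicator)
  also have "\<dots> = 1 - (\<integral>x. indicator {..< -y} x * std_normal_density x \<partial>lborel)"
    by (subst Bochner_Integration.integral_diff) (auto intro!: int_ind)
  also have "\<dots> = 1 - std_Phi (-y)" by (simp add: ind_lt_le Phi_alt)
  finally show ?thesis .
qed

lemma Phi_top: "(std_Phi \<longlongrightarrow> 1) at_top"
proof -
  have "((\<lambda>y. \<integral>x. indicator {..y} x *\<^sub>R std_normal_density x \<partial>lborel) \<longlongrightarrow> \<integral>x. std_normal_density x \<partial>lborel) at_top"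
    by (rule tendsto_integral_at_top) auto
  moreover have "std_Phi = (\<lambda>y. \<integral>x. indicator {..y} x *\<^sub>R std_normal_density x \<partial>lborel)"
    by (rule ext) (simp add: Phi_alt)
  ultimately show ?thesis by simp
qed

lemma Phi_bot: "(std_Phi \<longlongrightarrow> 0) at_bot"
proof -
  have "((\<lambda>y. 1 - std_Phi (-y)) \<longlongrightarrow> 1 - 1) at_bot"
    by (intro tendsto_intros filterlim_compose[OF Phi_top filterlim_uminus_at_top_at_bot])
  then show ?thesis by (simp add: Phi_sym[symmetric])
qed

lemma Phi_diff: "a \<le> b \<Longrightarrow> std_Phi b - std_Phi a = (\<integral>x. indicator {a<..b} x * std_normal_density x \<partial>lborel)"
  unfolding Phi_alt
  by (subst Bochner_Integration.integral_diff[symmetric]) (auto intro!: int_ind Bochner_Integration.integral_cong split: split_indicator)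

lemma Phi_lip: "a \<le> b \<Longrightarrow> std_Phi b - std_Phi a \<le> b - a"
proof -
  assume ab: "a \<le> b"
  have "(\<integral>x. indicator {a<..b} x * std_normal_density x \<partial>lborel) \<le> (\<integral>x. indicator {a<..b} x \<partial>lborel)"
    by (intro integral_mono int_ind) (auto simp: phi_le1 integrable_indicator_iff ab split: split_indicator)
  then show ?thesis using ab by (simp add: Phi_diff)
qed

lemma Phi_mono_strict: "a < b \<Longrightarrow> std_Phi a < std_Phi b"
proof -
  assume ab: "a < b"
  define c where "c = std_normal_density (\<bar>a\<bar> + \<bar>b\<bar>)"
  have cpos: "c > 0" unfolding c_def by (simp add: normal_density_pos)
  have le: "c \<le> std_normal_density x" if "a < x" "x \<le> b" for x
  proof -
    have "\<bar>x\<bar> \<le> \<bar>\<bar>a\<bar> + \<bar>b\<bar>\<bar>" using that by linarith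
    then have "x\<^sup>2 \<le> (\<bar>a\<bar> + \<bar>b\<bar>)\<^sup>2" using abs_le_square_iff by blast
    then show ?thesis unfolding c_def std_normal_density_def by (auto intro!: divide_right_mono)
  qed
  have ic: "integrable lborel (\<lambda>x. indicator {a<..b} x * c)"
    using ab by (intro integrable_mult_left) (simp add: integrable_indicator_iff)
  have "(\<integral>x. indicator {a<..b} x * c \<partial>lborel) \<le> (\<integral>x. indicator {a<..b} x * std_normal_density x \<partial>lborel)"
    by (intro integral_mono int_ind ic) (auto simp: le split: split_indicator)
  moreover have "(\<integral>x. indicator {a<..b} x * c \<partial>lborel) = (b - a) * c"
    using ab by simp
  ultimately have "(b-a)*c \<le> std_Phi b - std_Phi a" using Phi_diff[of a b] ab by simp
  moreover have "(b-a)*c > 0" using ab cpos by simp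
  ultimately show ?thesis by linarith
qed

lemma Phi_mono: "a \<le> b \<Longrightarrow> std_Phi a \<le> std_Phi b"
  using Phi_mono_strict[of a b] by (cases "a = b") auto

lemma Phi_cont: "continuous_on S std_Phi"
proof (rule lipschitz_on_continuous_on)
  show "1-lipschitz_on S std_Phi"
  proof (rule lipschitz_onI)
    fix x y assume "x \<in> S" "y \<in> S"
    show "dist (std_Phi x) (std_Phi y) \<le> 1 * dist x y"
      using Phi_lip[of x y] Phi_lip[of y x] Phi_mono[of x y] Phi_mono[of y x]
      by (cases "x \<le> y") (auto simp: dist_real_def)
  qed simp
qed

lemma gauss_deriv: "((\<lambda>x. - (C * exp (- x\<^sup>2 / 2))) has_real_derivative (x * (C * exp (- x\<^sup>2 / 2)))) (at x)"
  by (auto intro!: derivative_eq_intros simp: power2_eq_square algebra_simps)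

lemma phi_deriv: "((\<lambda>x. - std_normal_density x) has_real_derivative (x * std_normal_density x)) (at x)"
  unfolding std_normal_density_def by (rule gauss_deriv)

lemma phi_top: "(std_normal_density \<longlongrightarrow> 0) at_top"
proof -
  have "LIM x at_top. (x\<^sup>2 * (1/2::real)) :> at_top"
    by (rule filterlim_at_top_mult_tendsto_pos[OF tendsto_const]) (auto intro!: filterlim_pow_at_top filterlim_ident)
  then have "LIM x at_top. - (x\<^sup>2 * (1/2::real)) :> at_bot"
    by (rule filterlim_compose[OF filterlim_uminus_at_bot_at_top])
  then have "((\<lambda>x. exp (- (x\<^sup>2 * (1/2::real)))) \<longlongrightarrow> 0) at_top"
    by (rule filterlim_compose[OF exp_at_bot])
  then have "((\<lambda>x. (1 / sqrt (2 * pi)) * exp (- (x\<^sup>2 * (1/2::real)))) \<longlongrightarrow> (1 / sqrt (2 * pi)) * 0) at_top"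
    by (intro tendsto_intros)
  then show ?thesis by (simp add: std_normal_density_def[abs_def])
qed

lemma int_xphi: "integrable lborel (\<lambda>x. x * std_normal_density x)"
  using integrable_std_normal_moment[of 1] by (simp add: mult.commute)

lemma H_eq: "(\<integral>x. indicator {y..} x * (x * std_normal_density x) \<partial>lborel) = std_normal_density y"
proof -
  let ?f = "\<lambda>x. indicator {y..} x * (x * std_normal_density x)"
  have lim: "((\<lambda>b. \<integral>x. indicator {..b} x *\<^sub>R ?f x \<partial>lborel) \<longlongrightarrow> \<integral>x. ?f x \<partial>lborel) at_top"
    by (rule tendsto_integral_at_top) (auto intro!: int_ind int_xphi)
  moreover have ev: "\<forall>\<^sub>F b in at_top. (\<integral>x. indicator {..b} x *\<^sub>R ?f x \<partial>lborel) = std_normal_density y - std_normal_density b"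
  proof (rule eventually_at_top_linorder[THEN iffD2], intro exI allI impI)
    fix b assume b: "y \<le> b"
    have dv: "((\<lambda>x. - std_normal_density x) has_vector_derivative (x * std_normal_density x)) (at x within S)" for x S
      using has_field_derivative_at_within[OF phi_deriv] unfolding has_real_derivative_iff_has_vector_derivative by blast
    have ct: "continuous_on {y..b} (\<lambda>x. x * std_normal_density x)"
      unfolding std_normal_density_def by (intro continuous_intros) auto
    have "(\<integral>x. indicator {..b} x *\<^sub>R ?f x \<partial>lborel) = (\<integral>x. indicator {y..b} x *\<^sub>R (x * std_normal_density x) \<partial>lborel)"
      by (intro Bochner_Integration.integral_cong) (auto split: split_indicator)
    also have "\<dots> = (- std_normal_density b) - (- std_normal_density y)"
      by (rule integral_FTC_atLeastAtMost[OF b dv ct])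
    finally show "(\<integral>x. indicator {..b} x *\<^sub>R ?f x \<partial>lborel) = std_normal_density y - std_normal_density b" by simp
  qed
  have l1: "((\<lambda>b. std_normal_density y - std_normal_density b) \<longlongrightarrow> \<integral>x. ?f x \<partial>lborel) at_top"
    by (rule iffD1[OF tendsto_cong[OF ev] lim])
  have l2: "((\<lambda>b. std_normal_density y - std_normal_density b) \<longlongrightarrow> std_normal_density y - 0) at_top"
    by (intro tendsto_intros phi_top)
  show ?thesis using tendsto_unique[OF trivial_limit_at_top_linorder l1 l2] by simp
qed

definition Kf :: "real \<Rightarrow> real" where
  "Kf y = (\<integral>z. std_normal_density z * max (y - z) 0 \<partial>lborel)"

lemma Kf_integrable: "integrable lborel (\<lambda>z. std_normal_density z * max (y - z) 0)"
proof -
  have i1: "integrable lborel (\<lambda>z. \<bar>y\<bar> * std_normal_density z + std_normal_density z * \<bar>z\<bar>^1)"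
    by (intro Bochner_Integration.integrable_add integrable_mult_right integrable_std_normal_moment_abs) auto
  have ae: "AE x in lborel. norm (std_normal_density x * max (y - x) 0) \<le>
        norm (\<bar>y\<bar> * std_normal_density x + std_normal_density x * \<bar>x\<bar> ^ 1)"
  proof (rule AE_I2)
    fix x
    have "0 \<le> std_normal_density x" by simp
    moreover have "max (y - x) 0 \<le> \<bar>y\<bar> + \<bar>x\<bar>" by simp
    ultimately have "std_normal_density x * max (y - x) 0 \<le> std_normal_density x * (\<bar>y\<bar> + \<bar>x\<bar>)"
      by (intro mult_left_mono) auto
    then show "norm (std_normal_density x * max (y - x) 0) \<le>
        norm (\<bar>y\<bar> * std_normal_density x + std_normal_density x * \<bar>x\<bar> ^ 1)"
      by (simp add: algebra_simps)
  qed
  show ?thesis by (rule Bochner_Integration.integrable_bound[OF i1 _ ae]) simp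
qed

lemma Kf_eq: "Kf y = y * std_Phi y + std_normal_density y"
proof -
  have "Kf y = (\<integral>z. y * (indicator {..y} z * std_normal_density z) - indicator {..y} z * (z * std_normal_density z) \<partial>lborel)"
    unfolding Kf_def by (intro Bochner_Integration.integral_cong) (auto split: split_indicator simp: algebra_simps)
  also have "\<dots> = y * std_Phi y - (\<integral>z. indicator {..y} z * (z * std_normal_density z) \<partial>lborel)"
    by (subst Bochner_Integration.integral_diff) (auto intro!: int_ind int_xphi simp: Phi_alt)
  also have "(\<integral>z. indicator {..y} z * (z * std_normal_density z) \<partial>lborel)
      = (\<integral>z. indicator {..<y} z * (z * std_normal_density z) \<partial>lborel)"
    by (rule ind_lt_le[symmetric]) simp
  also have "\<dots> = (\<integral>z. z * std_normal_density z - indicator {y..} z * (z * std_normal_density z) \<partial>lborel)"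
    by (intro Bochner_Integration.integral_cong) (auto split: split_indicator)
  also have "\<dots> = (\<integral>z. z * std_normal_density z \<partial>lborel) - std_normal_density y"
    by (subst Bochner_Integration.integral_diff) (auto intro!: int_ind int_xphi simp: H_eq)
  also have "(\<integral>z. z * std_normal_density z \<partial>lborel) = 0"
    using integral_std_normal_moment_odd[of 0] by (simp add: mult.commute)
  finally show ?thesis by simp
qed

lemma Kf_conv: "Kf y0 + (y - y0) * std_Phi y0 \<le> Kf y"
proof -
  have "Kf y0 + (y - y0) * std_Phi y0 =
    (\<integral>z. std_normal_density z * max (y0 - z) 0 + (y - y0) * (indicator {..y0} z * std_normal_density z) \<partial>lborel)"
    unfolding Kf_def Phi_alt
    by (subst Bochner_Integration.integral_add) (auto intro!: int_ind Kf_integrable)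
  also have "\<dots> \<le> Kf y"
    unfolding Kf_def
  proof (rule integral_mono)
    show "integrable lborel (\<lambda>z. std_normal_density z * max (y0 - z) 0 + (y - y0) * (indicator {..y0} z * std_normal_density z))"
      by (auto intro!: Bochner_Integration.integrable_add integrable_mult_right int_ind Kf_integrable)
    fix z
    have "max (y0 - z) 0 + (y - y0) * indicator {..y0} z \<le> max (y - z) 0"
      by (auto split: split_indicator)
    then have "std_normal_density z * (max (y0 - z) 0 + (y - y0) * indicator {..y0} z) \<le> std_normal_density z * max (y - z) 0"
      by (rule mult_left_mono) simp
    then show "std_normal_density z * max (y0 - z) 0 + (y - y0) * (indicator {..y0} z * std_normal_density z) \<le> std_normal_density z * max (y - z) 0"
      by (simp add: algebra_simps)
  qed (rule Kf_integrable)
  finally show ?thesis .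
qed

lemma normal_max_int:
  assumes P: "prob_space M" and s: "s > 0"
    and D: "distributed M lborel D (\<lambda>x. ennreal (normal_density m s x))"
  shows "integrable M (\<lambda>\<omega>. max (x - D \<omega>) 0) \<and> (\<integral>\<omega>. max (x - D \<omega>) 0 \<partial>M) = s * Kf ((x - m) / s)"
proof -
  interpret prob_space M by (rule P)
  have Z: "distributed M lborel (\<lambda>\<omega>. (D \<omega> - m) / s) (\<lambda>x. ennreal (std_normal_density x))"
    using D normal_standard_normal_convert[OF s] by simp
  define y where "y = (x - m) / s"
  have eq: "max (x - D \<omega>) 0 = s * max (y - (D \<omega> - m) / s) 0" for \<omega>
    using s unfolding y_def by (auto simp: max_def field_simps)
  have i: "integrable lborel (\<lambda>z. std_normal_density z * (s * max (y - z) 0))"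
    using Kf_integrable[of y] by (simp add: integrable_mult_right mult.left_commute)
  have "integrable M (\<lambda>\<omega>. s * max (y - (D \<omega> - m) / s) 0)"
    using distributed_integrable[OF Z, of "\<lambda>z. s * max (y - z) 0"] i by simp
  moreover have "(\<integral>\<omega>. s * max (y - (D \<omega> - m) / s) 0 \<partial>M) = s * Kf y"
    using distributed_integral[OF Z, of "\<lambda>z. s * max (y - z) 0", symmetric]
    by (simp add: Kf_def mult.left_commute)
  ultimately show ?thesis by (simp add: eq y_def)
qed

lemma pw_ident:
  fixes d :: "nat \<Rightarrow> real"
  shows "(\<Sum>i<n. r * min X (d i) + \<nu> * max (X - d i) 0 - c * X)
       + (r - \<nu> - t) * min (\<Sum>i<n. max (X - d i) 0) (\<Sum>i<n. max (d i - X) 0)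
     = real n * (r - c) * X - t * (\<Sum>i<n. max (X - d i) 0) - (r - \<nu> - t) * max (real n * X - (\<Sum>i<n. d i)) 0"
proof -
  define A where "A = (\<Sum>i<n. max (X - d i) 0)"
  have e1: "(\<Sum>i<n. max (d i - X) 0) = A - (real n * X - (\<Sum>i<n. d i))"
  proof -
    have "(\<Sum>i<n. max (d i - X) 0) = (\<Sum>i<n. max (X - d i) 0 - (X - d i))"
      by (intro sum.cong) auto
    also have "\<dots> = A - (real n * X - (\<Sum>i<n. d i))"
      by (simp add: A_def sum_subtractf)
    finally show ?thesis .
  qed
  have e2: "(\<Sum>i<n. r * min X (d i) + \<nu> * max (X - d i) 0 - c * X) = real n * (r - c) * X - (r - \<nu>) * A"
  proof -
    have "(\<Sum>i<n. r * min X (d i) + \<nu> * max (X - d i) 0 - c * X) = (\<Sum>i<n. (r - c) * X - (r - \<nu>) * max (X - d i) 0)"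
      by (intro sum.cong) (auto simp: min_def max_def algebra_simps)
    also have "\<dots> = real n * (r - c) * X - (r - \<nu>) * A"
      by (simp add: A_def sum_subtractf sum_distrib_left)
    finally show ?thesis .
  qed
  have e3: "min A (A - B) = A - max B 0" for B :: real by (auto simp: min_def max_def)
  show ?thesis unfolding e1 e2 e3 A_def[symmetric] by (simp add: algebra_simps)
qed

lemma sum_delta_real: "i < (n::nat) \<Longrightarrow> (\<Sum>j<n. (if j = i then 1 else 0) * f j) = (f i :: real)"
proof -
  assume i: "i < n"
  have "(\<Sum>j<n. (if j = i then 1 else 0) * f j) = (\<Sum>j<n. if j = i then f j else 0)"
    by (intro sum.cong) auto
  also have "\<dots> = f i" using i by (subst sum.delta) auto
  finally show ?thesis .
qed

lemma sum_ifeq: "j < n \<Longrightarrow> (\<Sum>k<n. if j = k then a else b) = a + (real n - 1) * (b :: real)"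
proof -
  assume j: "j < n"
  have "(\<Sum>k<n. if j = k then a else b) = (\<Sum>k<n. b + (if j = k then a - b else 0))"
    by (intro sum.cong) auto
  also have "\<dots> = real n * b + (a - b)" using j by (simp add: sum.distrib)
  finally show ?thesis by (simp add: algebra_simps)
qed

theorem mainTheorem7:
  fixes M :: "'a measure" and n :: nat and D :: "nat \<Rightarrow> 'a \<Rightarrow> real"
    and \<mu> \<sigma> \<rho> r c \<nu> t :: real
  assumes "prob_space M"
    and "n \<ge> 1"
    and "\<sigma> > 0"
    and "n = 1 \<or> (- 1 / (real n - 1) < \<rho> \<and> \<rho> \<le> 1)"
    and "jointly_normal M n D (\<lambda>i. \<mu>) (\<lambda>i j. if i = j then \<sigma>^2 else \<rho> * \<sigma>^2)"
    and "r > c" and "c > \<nu>" and "0 < t" and "t < r - \<nu>"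
  shows
    "let L = sqrt (real n / (1 + (real n - 1) * \<rho>));
         g = r - c; g' = c - \<nu>; R = (r - c) / (r - \<nu>);
         \<gamma> = t / (r - \<nu>); \<gamma>' = 1 - \<gamma>;
         J = J_coal M n D r c \<nu> t
     in (\<exists>!Y. R = \<gamma> * std_Phi Y + \<gamma>' * std_Phi (L * Y)) \<and>
        (\<forall>Y. R = \<gamma> * std_Phi Y + \<gamma>' * std_Phi (L * Y) \<longrightarrow>
           (\<forall>X. J X \<le> J (\<mu> + \<sigma> * Y)) \<and>
           J (\<mu> + \<sigma> * Y) = real n * (g + g') *
              (R * \<mu> - \<sigma> * (\<gamma> * std_phi Y + \<gamma>' * std_phi (L * Y) / L)) \<and>
           J (\<mu> + \<sigma> * Y) / real n = (g + g') *
              (R * \<mu> - \<sigma> * (\<gamma> * std_phi Y + \<gamma>' * std_phi (L * Y) / L)))"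
proof -
  interpret P: prob_space M by (rule assms(1))
  have sig: "\<sigma> > 0" by (rule assms(3))
  define q where "q = 1 + (real n - 1) * \<rho>"
  have qpos: "q > 0"
  proof (cases "n = 1")
    case True then show ?thesis by (simp add: q_def)
  next
    case False
    then have n2: "real n - 1 > 0" using assms(2) by simp
    have "- 1 / (real n - 1) < \<rho>" using assms(4) False by simp
    then have "(- 1 / (real n - 1)) * (real n - 1) < \<rho> * (real n - 1)"
      using n2 by (intro mult_strict_right_mono) auto
    then have "- 1 < \<rho> * (real n - 1)" using n2 by simp
    then show ?thesis by (simp add: q_def algebra_simps)
  qed
  have npos: "real n > 0" using assms(2) by simp
  define L where "L = sqrt (real n / q)"
  define s where "s = \<sigma> * sqrt (real n * q)"
  have Lpos: "L > 0" unfolding L_def using npos qpos by simp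
  have spos: "s > 0" unfolding s_def using npos qpos sig by simp
  have Ls: "L * s = real n * \<sigma>"
  proof -
    have "L * s = \<sigma> * (sqrt (real n / q) * sqrt (real n * q))" by (simp add: L_def s_def)
    also have "sqrt (real n / q) * sqrt (real n * q) = sqrt (real n * real n)"
      using qpos by (simp flip: real_sqrt_mult)
    also have "\<dots> = real n" by simp
    finally show ?thesis by simp
  qed
  define p where "p = r - \<nu> - t"
  have ppos: "p > 0" using assms(9) by (simp add: p_def)
  have tpos: "t > 0" by (rule assms(8))
  have JN: "\<forall>a :: nat \<Rightarrow> real.
        let m = (\<Sum>i<n. a i * \<mu>);
            v = (\<Sum>i<n. \<Sum>j<n. a i * a j * (if i = j then \<sigma>^2 else \<rho> * \<sigma>^2))
        in (if v > 0
            then distributed M lborel (\<lambda>\<omega>. \<Sum>i<n. a i * D i \<omega>)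
                   (\<lambda>x. ennreal (normal_density m (sqrt v) x))
            else (AE \<omega> in M. (\<Sum>i<n. a i * D i \<omega>) = m))"
    using assms(5) unfolding jointly_normal_def by blast
  have Di: "distributed M lborel (D i) (\<lambda>x. ennreal (normal_density \<mu> \<sigma> x))" if i: "i < n" for i
  proof -
    define a :: "nat \<Rightarrow> real" where "a = (\<lambda>j. if j = i then 1 else 0)"
    have m: "(\<Sum>j<n. a j * \<mu>) = \<mu>" unfolding a_def using sum_delta_real[OF i, of "\<lambda>_. \<mu>"] by simp
    have v: "(\<Sum>j<n. \<Sum>k<n. a j * a k * (if j = k then \<sigma>^2 else \<rho> * \<sigma>^2)) = \<sigma>^2"
    proof -
      have "(\<Sum>j<n. \<Sum>k<n. a j * a k * (if j = k then \<sigma>^2 else \<rho> * \<sigma>^2))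
          = (\<Sum>j<n. a j * (\<Sum>k<n. a k * (if j = k then \<sigma>^2 else \<rho> * \<sigma>^2)))"
        by (simp add: sum_distrib_left mult.assoc)
      also have "\<dots> = (\<Sum>k<n. a k * (if i = k then \<sigma>^2 else \<rho> * \<sigma>^2))"
        unfolding a_def by (rule sum_delta_real[OF i])
      also have "\<dots> = \<sigma>^2"
        unfolding a_def using sum_delta_real[OF i, of "\<lambda>k. if i = k then \<sigma>^2 else \<rho> * \<sigma>^2"] by simp
      finally show ?thesis .
    qed
    have f: "(\<lambda>\<omega>. \<Sum>j<n. a j * D j \<omega>) = D i"
      unfolding a_def using sum_delta_real[OF i] by (intro ext) simp
    have "distributed M lborel (\<lambda>\<omega>. \<Sum>j<n. a j * D j \<omega>) (\<lambda>x. ennreal (normal_density \<mu> (sqrt (\<sigma>^2)) x))"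
      using spec[OF JN, of a] sig unfolding Let_def m v by simp
    then show ?thesis using sig unfolding f by simp
  qed
  have Sd: "distributed M lborel (\<lambda>\<omega>. \<Sum>i<n. D i \<omega>) (\<lambda>x. ennreal (normal_density (real n * \<mu>) s x))"
  proof -
    define a :: "nat \<Rightarrow> real" where "a = (\<lambda>j. 1)"
    have m: "(\<Sum>j<n. a j * \<mu>) = real n * \<mu>" unfolding a_def by simp
    have v: "(\<Sum>j<n. \<Sum>k<n. a j * a k * (if j = k then \<sigma>^2 else \<rho> * \<sigma>^2)) = real n * \<sigma>^2 * q"
    proof -
      have "(\<Sum>j<n. \<Sum>k<n. a j * a k * (if j = k then \<sigma>^2 else \<rho> * \<sigma>^2))
          = (\<Sum>j<n. \<sigma>^2 + (real n - 1) * (\<rho> * \<sigma>^2))"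
        unfolding a_def by (intro sum.cong refl) (simp add: sum_ifeq)
      also have "\<dots> = real n * \<sigma>^2 * q" by (simp add: q_def algebra_simps)
      finally show ?thesis .
    qed
    have vpos: "real n * \<sigma>^2 * q > 0" using npos sig qpos by simp
    have sq: "sqrt (real n * \<sigma>^2 * q) = s"
      unfolding s_def using sig by (simp add: real_sqrt_mult mult.commute mult.left_commute)
    have f: "(\<lambda>\<omega>. \<Sum>j<n. a j * D j \<omega>) = (\<lambda>\<omega>. \<Sum>i<n. D i \<omega>)"
      unfolding a_def by simp
    show ?thesis
      using spec[OF JN, of a] vpos unfolding Let_def m v sq f by simp
  qed
  have Hint: "integrable M (\<lambda>\<omega>. max (X - D i \<omega>) 0) \<and>
      (\<integral>\<omega>. max (X - D i \<omega>) 0 \<partial>M) = \<sigma> * Kf ((X - \<mu>) / \<sigma>)" if "i < n" for i X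
    by (rule normal_max_int[OF assms(1) sig Di[OF that]])
  have Sint: "integrable M (\<lambda>\<omega>. max (real n * X - (\<Sum>i<n. D i \<omega>)) 0) \<and>
      (\<integral>\<omega>. max (real n * X - (\<Sum>i<n. D i \<omega>)) 0 \<partial>M) = s * Kf ((real n * X - real n * \<mu>) / s)" for X
    by (rule normal_max_int[OF assms(1) spos Sd])
  have Jform: "J_coal M n D r c \<nu> t X = real n * (r - c) * X - t * (real n * (\<sigma> * Kf ((X - \<mu>) / \<sigma>)))
       - p * (s * Kf ((real n * X - real n * \<mu>) / s))" for X
  proof -
    have "J_coal M n D r c \<nu> t X = (\<integral>\<omega>. real n * (r - c) * X - t * (\<Sum>i<n. max (X - D i \<omega>) 0)
        - p * max (real n * X - (\<Sum>i<n. D i \<omega>)) 0 \<partial>M)"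
      unfolding J_coal_def Let_def p_def by (intro Bochner_Integration.integral_cong refl pw_ident)
    also have "\<dots> = real n * (r - c) * X - t * (\<Sum>i<n. (\<integral>\<omega>. max (X - D i \<omega>) 0 \<partial>M))
        - p * (\<integral>\<omega>. max (real n * X - (\<Sum>i<n. D i \<omega>)) 0 \<partial>M)"
    proof -
      have i1: "integrable M (\<lambda>\<omega>. \<Sum>i<n. max (X - D i \<omega>) 0)"
        using Hint by (intro Bochner_Integration.integrable_sum) auto
      have i2: "integrable M (\<lambda>\<omega>. max (real n * X - (\<Sum>i<n. D i \<omega>)) 0)" using Sint by blast
      have i0: "integrable M (\<lambda>\<omega>. real n * (r - c) * X)" by simp
      have "(\<integral>\<omega>. real n * (r - c) * X - t * (\<Sum>i<n. max (X - D i \<omega>) 0)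
        - p * max (real n * X - (\<Sum>i<n. D i \<omega>)) 0 \<partial>M)
        = (\<integral>\<omega>. real n * (r - c) * X - t * (\<Sum>i<n. max (X - D i \<omega>) 0) \<partial>M)
          - (\<integral>\<omega>. p * max (real n * X - (\<Sum>i<n. D i \<omega>)) 0 \<partial>M)"
        by (rule Bochner_Integration.integral_diff) (auto intro!: Bochner_Integration.integrable_diff i0 i1 i2)
      also have "(\<integral>\<omega>. real n * (r - c) * X - t * (\<Sum>i<n. max (X - D i \<omega>) 0) \<partial>M)
          = (\<integral>\<omega>. real n * (r - c) * X \<partial>M) - (\<integral>\<omega>. t * (\<Sum>i<n. max (X - D i \<omega>) 0) \<partial>M)"
        by (rule Bochner_Integration.integral_diff) (auto intro!: i0 i1)
      also have "(\<integral>\<omega>. real n * (r - c) * X \<partial>M) = real n * (r - c) * X" by (simp add: P.prob_space)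
      also have "(\<integral>\<omega>. t * (\<Sum>i<n. max (X - D i \<omega>) 0) \<partial>M) = t * (\<Sum>i<n. (\<integral>\<omega>. max (X - D i \<omega>) 0 \<partial>M))"
        using Hint by (simp add: Bochner_Integration.integral_sum)
      also have "(\<integral>\<omega>. p * max (real n * X - (\<Sum>i<n. D i \<omega>)) 0 \<partial>M)
          = p * (\<integral>\<omega>. max (real n * X - (\<Sum>i<n. D i \<omega>)) 0 \<partial>M)" by simp
      finally show ?thesis .
    qed
    also have "(\<Sum>i<n. (\<integral>\<omega>. max (X - D i \<omega>) 0 \<partial>M)) = real n * (\<sigma> * Kf ((X - \<mu>) / \<sigma>))"
      using Hint by simp
    finally show ?thesis using Sint by simp
  qed
  have Jform2: "J_coal M n D r c \<nu> t (\<mu> + \<sigma> * Y) = real n * (r - c) * (\<mu> + \<sigma> * Y)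
      - t * (real n * (\<sigma> * Kf Y)) - p * (s * Kf (L * Y))" for Y
  proof -
    have a1: "(\<mu> + \<sigma> * Y - \<mu>) / \<sigma> = Y" using sig by simp
    have "real n * (\<mu> + \<sigma> * Y) - real n * \<mu> = (L * Y) * s" using Ls by (simp add: algebra_simps)
    then have a2: "(real n * (\<mu> + \<sigma> * Y) - real n * \<mu>) / s = L * Y" using spos by simp
    show ?thesis unfolding Jform a1 a2 ..
  qed
  have rnu: "r - \<nu> > 0" using assms(6,7) by simp
  define \<gamma> where "\<gamma> = t / (r - \<nu>)"
  have gpos: "\<gamma> > 0" using tpos rnu by (simp add: \<gamma>_def)
  have g'pos: "1 - \<gamma> > 0" using assms(9) rnu by (simp add: \<gamma>_def)
  define R where "R = (r - c) / (r - \<nu>)"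
  have Rpos: "R > 0" using assms(6) rnu by (simp add: R_def)
  have Rlt: "R < 1" using assms(7) rnu by (simp add: R_def)
  define G where "G = (\<lambda>Y. \<gamma> * std_Phi Y + (1 - \<gamma>) * std_Phi (L * Y))"
  have Gmono: "G Y1 < G Y2" if "Y1 < Y2" for Y1 Y2
  proof -
    have "std_Phi Y1 < std_Phi Y2" using that by (rule Phi_mono_strict)
    moreover have "std_Phi (L * Y1) \<le> std_Phi (L * Y2)" using that Lpos by (intro Phi_mono) simp
    ultimately show ?thesis unfolding G_def using gpos g'pos
      by (simp add: add_less_le_mono mult_left_mono)
  qed
  have Gcont: "continuous_on S G" for S
  proof -
    have "continuous_on S (\<lambda>Y. std_Phi (L * Y))"
      by (rule continuous_on_compose2[OF Phi_cont[of UNIV]]) (auto intro!: continuous_intros)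
    then show ?thesis unfolding G_def by (intro continuous_intros Phi_cont)
  qed
  have ex: "\<exists>Y. R = G Y"
  proof -
    have "\<forall>\<^sub>F y in at_bot. std_Phi y < R" using order_tendstoD(2)[OF Phi_bot Rpos] .
    then obtain N1 where N1: "\<And>y. y \<le> N1 \<Longrightarrow> std_Phi y < R" unfolding eventually_at_bot_linorder by blast
    have "\<forall>\<^sub>F y in at_top. std_Phi y > R" using order_tendstoD(1)[OF Phi_top Rlt] .
    then obtain N2 where N2: "\<And>y. y \<ge> N2 \<Longrightarrow> std_Phi y > R" unfolding eventually_at_top_linorder by blast
    define a where "a = min N1 (N1 / L)"
    define b where "b = max (max N2 (N2 / L)) a"
    have "a \<le> N1" unfolding a_def by simp
    moreover have "L * a \<le> N1"
    proof -
      have "a \<le> N1 / L" unfolding a_def by simp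
      then show ?thesis using Lpos by (simp add: le_divide_eq mult.commute)
    qed
    ultimately have "std_Phi a < R" "std_Phi (L * a) < R" using N1 by auto
    then have "\<gamma> * std_Phi a < \<gamma> * R" "(1 - \<gamma>) * std_Phi (L * a) < (1 - \<gamma>) * R"
      using gpos g'pos by (auto intro: mult_strict_left_mono)
    moreover have "\<gamma> * R + (1 - \<gamma>) * R = R" by (simp add: algebra_simps)
    ultimately have Ga: "G a < R" unfolding G_def by linarith
    have "b \<ge> N2" unfolding b_def by simp
    moreover have "L * b \<ge> N2"
    proof -
      have "b \<ge> N2 / L" unfolding b_def by simp
      then show ?thesis using Lpos by (simp add: divide_le_eq mult.commute)
    qed
    ultimately have "std_Phi b > R" "std_Phi (L * b) > R" using N2 by auto
    then have "\<gamma> * std_Phi b > \<gamma> * R" "(1 - \<gamma>) * std_Phi (L * b) > (1 - \<gamma>) * R"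
      using gpos g'pos by (auto intro: mult_strict_left_mono)
    moreover have "\<gamma> * R + (1 - \<gamma>) * R = R" by (simp add: algebra_simps)
    ultimately have Gb: "G b > R" unfolding G_def by linarith
    have "a \<le> b" unfolding b_def by simp
    then obtain Y where "a \<le> Y" "Y \<le> b" "G Y = R"
      using IVT'[of G a R b] Ga Gb Gcont by force
    then show ?thesis by metis
  qed
  have uniq: "Y1 = Y2" if "R = G Y1" "R = G Y2" for Y1 Y2
    using Gmono[of Y1 Y2] Gmono[of Y2 Y1] that by (cases Y1 Y2 rule: linorder_cases) auto
  have ga: "(r - \<nu>) * \<gamma> = t" using rnu by (simp add: \<gamma>_def)
  have gb: "(r - \<nu>) * (1 - \<gamma>) = p" using ga by (simp add: p_def algebra_simps)
  have gc: "(r - \<nu>) * R = r - c" using rnu by (simp add: R_def)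
  have key: "r - c = t * std_Phi Y + p * std_Phi (L * Y)" if "R = G Y" for Y
  proof -
    have "r - c = (r - \<nu>) * G Y" using that gc by simp
    also have "\<dots> = ((r - \<nu>) * \<gamma>) * std_Phi Y + ((r - \<nu>) * (1 - \<gamma>)) * std_Phi (L * Y)"
      unfolding G_def by (simp add: algebra_simps)
    finally show ?thesis unfolding ga gb .
  qed
  have opt: "J_coal M n D r c \<nu> t X \<le> J_coal M n D r c \<nu> t (\<mu> + \<sigma> * Y)" if RY: "R = G Y" for X Y
  proof -
    define Z where "Z = (X - \<mu>) / \<sigma>"
    have XZ: "X = \<mu> + \<sigma> * Z" unfolding Z_def using sig by simp
    have k1: "Kf Y + (Z - Y) * std_Phi Y \<le> Kf Z" by (rule Kf_conv)
    have k2: "Kf (L * Y) + (L * Z - L * Y) * std_Phi (L * Y) \<le> Kf (L * Z)" by (rule Kf_conv)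
    have h1: "t * (real n * \<sigma>) * (Kf Y + (Z - Y) * std_Phi Y) \<le> t * (real n * \<sigma>) * Kf Z"
      using k1 tpos npos sig by (intro mult_left_mono) auto
    have h2: "p * s * (Kf (L * Y) + (L * Z - L * Y) * std_Phi (L * Y)) \<le> p * s * Kf (L * Z)"
      using k2 ppos spos by (intro mult_left_mono) auto
    have e: "p * s * ((L * Z - L * Y) * std_Phi (L * Y)) = p * (real n * \<sigma>) * ((Z - Y) * std_Phi (L * Y))"
    proof -
      have "p * s * ((L * Z - L * Y) * std_Phi (L * Y)) = p * (L * s) * ((Z - Y) * std_Phi (L * Y))"
        by (simp add: algebra_simps)
      then show ?thesis unfolding Ls .
    qed
    have kk: "real n * (r - c) * \<sigma> * (Z - Y) = t * (real n * \<sigma>) * ((Z - Y) * std_Phi Y)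
        + p * (real n * \<sigma>) * ((Z - Y) * std_Phi (L * Y))"
      using key[OF RY] by (simp add: algebra_simps)
    have "J_coal M n D r c \<nu> t X = real n * (r - c) * (\<mu> + \<sigma> * Z)
      - t * (real n * \<sigma>) * Kf Z - p * s * Kf (L * Z)"
      unfolding XZ Jform2 by (simp add: algebra_simps)
    also have "\<dots> \<le> real n * (r - c) * (\<mu> + \<sigma> * Z)
      - t * (real n * \<sigma>) * (Kf Y + (Z - Y) * std_Phi Y) - p * s * (Kf (L * Y) + (L * Z - L * Y) * std_Phi (L * Y))"
      using h1 h2 by linarith
    also have "\<dots> = real n * (r - c) * (\<mu> + \<sigma> * Y) - t * (real n * \<sigma>) * Kf Y - p * s * Kf (L * Y)
       + (real n * (r - c) * \<sigma> * (Z - Y) - t * (real n * \<sigma>) * ((Z - Y) * std_Phi Y)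
        - p * s * ((L * Z - L * Y) * std_Phi (L * Y)))"
      by (simp add: algebra_simps)
    also have "\<dots> = real n * (r - c) * (\<mu> + \<sigma> * Y) - t * (real n * \<sigma>) * Kf Y - p * s * Kf (L * Y)"
      unfolding e kk by simp
    also have "\<dots> = J_coal M n D r c \<nu> t (\<mu> + \<sigma> * Y)"
      unfolding Jform2 by (simp add: algebra_simps)
    finally show ?thesis .
  qed
  have val: "J_coal M n D r c \<nu> t (\<mu> + \<sigma> * Y) = real n * (r - \<nu>) *
      (R * \<mu> - \<sigma> * (\<gamma> * std_phi Y + (1 - \<gamma>) * std_phi (L * Y) / L))" if RY: "R = G Y" for Y
  proof -
    have s_eq: "s = real n * \<sigma> / L" using Ls Lpos by (simp add: field_simps)
    have "J_coal M n D r c \<nu> t (\<mu> + \<sigma> * Y) = real n * (r - c) * \<mu>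
        + real n * \<sigma> * Y * ((r - c) - t * std_Phi Y - p * std_Phi (L * Y))
        - real n * \<sigma> * (t * std_normal_density Y + p * std_normal_density (L * Y) / L)"
      unfolding Jform2 Kf_eq s_eq using Lpos by (simp add: field_simps)
    also have "(r - c) - t * std_Phi Y - p * std_Phi (L * Y) = 0" using key[OF RY] by simp
    also have "real n * (r - c) * \<mu> + real n * \<sigma> * Y * 0
        - real n * \<sigma> * (t * std_normal_density Y + p * std_normal_density (L * Y) / L)
      = real n * (r - \<nu>) * (R * \<mu> - \<sigma> * (\<gamma> * std_phi Y + (1 - \<gamma>) * std_phi (L * Y) / L))"
    proof -
      have "real n * (r - \<nu>) * (R * \<mu> - \<sigma> * (\<gamma> * std_phi Y + (1 - \<gamma>) * std_phi (L * Y) / L))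
        = real n * (((r - \<nu>) * R) * \<mu> - \<sigma> * (((r - \<nu>) * \<gamma>) * std_phi Y + ((r - \<nu>) * (1 - \<gamma>)) * std_phi (L * Y) / L))"
        by (simp add: algebra_simps)
      also have "\<dots> = real n * ((r - c) * \<mu> - \<sigma> * (t * std_phi Y + p * std_phi (L * Y) / L))"
        unfolding ga gb gc ..
      finally show ?thesis unfolding std_phi_def by (simp add: algebra_simps)
    qed
    finally show ?thesis .
  qed
  have eqL: "sqrt (real n / (1 + (real n - 1) * \<rho>)) = L" by (simp add: L_def q_def)
  have rr: "r - c + (c - \<nu>) = r - \<nu>" by simp
  show ?thesis
    unfolding Let_def eqL rr R_def[symmetric] \<gamma>_def[symmetric]
  proof (intro conjI allI impI)
    show "\<exists>!Y. R = \<gamma> * std_Phi Y + (1 - \<gamma>) * std_Phi (L * Y)"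
      using ex uniq unfolding G_def by blast
  next
    fix Y X assume "R = \<gamma> * std_Phi Y + (1 - \<gamma>) * std_Phi (L * Y)"
    then have RY: "R = G Y" unfolding G_def by simp
    show "J_coal M n D r c \<nu> t X \<le> J_coal M n D r c \<nu> t (\<mu> + \<sigma> * Y)" by (rule opt[OF RY])
  next
    fix Y assume "R = \<gamma> * std_Phi Y + (1 - \<gamma>) * std_Phi (L * Y)"
    then have RY: "R = G Y" unfolding G_def by simp
    show "J_coal M n D r c \<nu> t (\<mu> + \<sigma> * Y) = real n * (r - \<nu>) *
      (R * \<mu> - \<sigma> * (\<gamma> * std_phi Y + (1 - \<gamma>) * std_phi (L * Y) / L))" by (rule val[OF RY])
  next
    fix Y assume "R = \<gamma> * std_Phi Y + (1 - \<gamma>) * std_Phi (L * Y)"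
    then have RY: "R = G Y" unfolding G_def by simp
    show "J_coal M n D r c \<nu> t (\<mu> + \<sigma> * Y) / real n = (r - \<nu>) *
      (R * \<mu> - \<sigma> * (\<gamma> * std_phi Y + (1 - \<gamma>) * std_phi (L * Y) / L))"
      using val[OF RY] npos by simp
  qed
qed

end
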